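(* Assume the setting in the context, with a decomposition of $\mathcal X$ over $A$, $g\in\mathcal G_s$, an integer $T>0$, and $$\operatorname*{argmin}_{u\in\mathcal U} J^*_{t+1}(Ax+Bu)\cap\Big[\bigoplus_{i\in\mathcal I}\mathcal E_i\Big]\neq\emptyset\quad\text{for all }x\in\mathcal X,\ t\in\{0,\dots,T-1\}.$$ Then for every $t\in\{0,\dots,T\}$ and every $i\in\mathcal I$, the restriction of $J^*_t$ to $\mathcal X_i$ equals $\bar J^*_{i,t}$, i.e. $J^*_t(z)=\bar J^*_{i,t}(z)$ for all $z\in\mathcal X_i$.
   Context: Let $\mathcal F$ be a field and $\mathcal X,\mathcal U$ finite-dimensional vector spaces over $\mathcal F$. Let $A:\mathcal X\to\mathcal X$ and $B:\mathcal U\to\mathcal X$ be linear maps with $B$ injective, and let $g:\mathcal X\to\mathbb R_{\ge0}$ satisfy $g(x)=0\iff x=0$. Standing assumption: all minima appearing below are attained. For the finite-horizon problem $(A,B,g,T)$ associated with $x_{t+1}=Ax_t+Bu_t$, the cost-to-go functions are $J^*_T=g$ and $J^*_t(x)=g(x)+\min_{u\in\mathcal U}J^*_{t+1}(Ax+Bu)$ for $t=0,\dots,T-1$. A decomposition of $\mathcal X$ over $A$ is a direct sum $\mathcal X=\mathcal X_1\oplus\cdots\oplus\mathcal X_r$ with $r>1$ and $A\mathcal X_i\subseteq\mathcal X_i$ for all $i\in\mathcal I=\{1,\dots,r\}$; $\rho_i:\mathcal X\to\mathcal X_i$ is the projection along the other summands. $\mathcal G_s$ is the set of $h:\mathcal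 X\to\mathbb R_{\ge0}$ with $h(x)=\sum_i h(\rho_i(x))$ for all $x$. $\mathcal E_i=\{u\in\mathcal U:Bu\in\mathcal X_i\}$. For the subproblem $(A,B|_{\mathcal E_i},g,T)$ (system $x_{i,t+1}=Ax_{i,t}+B\bar u_{i,t}$, states in $\mathcal X_i$, inputs in $\mathcal E_i$), the cost-to-go functions $\bar J^*_{i,t}:\mathcal X_i\to\mathbb R_{\ge0}$ are $\bar J^*_{i,T}=g|_{\mathcal X_i}$ and $\bar J^*_{i,t}(z)=g(z)+\min_{u\in\mathcal E_i}\bar J^*_{i,t+1}(Az+Bu)$ for $t=0,\dots,T-1$. *)

theory Defs
  imports Complex_Main
begin

abbreviation idx :: "nat \<Rightarrow> nat set" where "idx r \<equiv> {1..r}"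

definition is_decomposition ::
  "('f::field \<Rightarrow> 'x::ab_group_add \<Rightarrow> 'x) \<Rightarrow> ('x \<Rightarrow> 'x) \<Rightarrow> nat \<Rightarrow> (nat \<Rightarrow> 'x set) \<Rightarrow> bool" where
  "is_decomposition scaleX A r Xs \<longleftrightarrow>
     r > 1 \<and>
     (\<forall>i\<in>idx r. module.subspace scaleX (Xs i) \<and> A ` Xs i \<subseteq> Xs i) \<and>
     (\<forall>x. \<exists>!f. (\<forall>i\<in>idx r. f i \<in> Xs i) \<and> (\<forall>i. i \<notin> idx r \<longrightarrow> f i = 0) \<and>
              x = (\<Sum>i\<in>idx r. f i))"

definition proj :: "nat \<Rightarrow> (nat \<Rightarrow> 'x::ab_group_add set) \<Rightarrow> nat \<Rightarrow> 'x \<Rightarrow> 'x" where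
  "proj r Xs i x = (THE f. (\<forall>j\<in>idx r. f j \<in> Xs j) \<and> (\<forall>j. j \<notin> idx r \<longrightarrow> f j = 0) \<and>
              x = (\<Sum>j\<in>idx r. f j)) i"

definition G_s :: "nat \<Rightarrow> (nat \<Rightarrow> 'x::ab_group_add set) \<Rightarrow> ('x \<Rightarrow> real) set" where
  "G_s r Xs = {h. (\<forall>x. h x \<ge> 0) \<and> (\<forall>x. h x = (\<Sum>i\<in>idx r. h (proj r Xs i x)))}"

definition Eset :: "('u \<Rightarrow> 'x) \<Rightarrow> 'x set \<Rightarrow> 'u set" where
  "Eset B Xi = {u. B u \<in> Xi}"

text \<open>Cost-to-go with k steps to go and input set Us:
  V_0 = g, V_{k+1}(x) = g x + min_{u in Us} V_k(A x + B u)
  (min written as Inf; attainment is assumed separately).\<close>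
fun ctg :: "('x::plus \<Rightarrow> 'x) \<Rightarrow> ('u \<Rightarrow> 'x) \<Rightarrow> ('x \<Rightarrow> real) \<Rightarrow> 'u set \<Rightarrow> nat \<Rightarrow> 'x \<Rightarrow> real" where
  "ctg A B g Us 0 x = g x"
| "ctg A B g Us (Suc k) x = g x + (INF u\<in>Us. ctg A B g Us k (A x + B u))"

definition Jstar :: "('x::plus \<Rightarrow> 'x) \<Rightarrow> ('u \<Rightarrow> 'x) \<Rightarrow> ('x \<Rightarrow> real) \<Rightarrow> nat \<Rightarrow> nat \<Rightarrow> 'x \<Rightarrow> real" where
  "Jstar A B g T t = ctg A B g UNIV (T - t)"

text \<open>Bar J*_{i,t} for the subproblem (A, B restricted to E_i, g, T); meaningful on X_i.\<close>
definition Jbar :: "('x::plus \<Rightarrow> 'x) \<Rightarrow> ('u \<Rightarrow> 'x) \<Rightarrow> ('x \<Rightarrow> real) \<Rightarrow> 'x set \<Rightarrow> nat \<Rightarrow> nat \<Rightarrow> 'x \<Rightarrow> real" where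
  "Jbar A B g Xi T t = ctg A B g (Eset B Xi) (T - t)"

end

theory Submission
  imports Defs
begin

lemma ctg_nonneg:
  assumes "\<forall>x. g x \<ge> 0" and "Us \<noteq> {}"
  shows "ctg A B g Us k x \<ge> 0"
proof (induction k arbitrary: x)
  case 0 then show ?case using assms by simp
next
  case (Suc k)
  have "(INF u\<in>Us. ctg A B g Us k (A x + B u)) \<ge> 0"
    using assms(2) Suc by (intro cINF_greatest) auto
  then show ?case using assms(1) by (simp add: add_nonneg_nonneg)
qed

lemma INF_at_min:
  fixes f :: "'a \<Rightarrow> real"
  assumes "u \<in> S" "\<forall>v\<in>S. f u \<le> f v"
  shows "(INF v\<in>S. f v) = f u"
proof (rule antisym)
  show "(INF v\<in>S. f v) \<le> f u"
    using assms by (intro cINF_lower) (auto intro!: bdd_belowI2)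
  show "f u \<le> (INF v\<in>S. f v)" using assms by (intro cINF_greatest) auto
qed

lemma additive_sum:
  fixes A :: "'x::ab_group_add \<Rightarrow> 'y::ab_group_add"
  assumes "\<forall>x y. A (x + y) = A x + A y"
  shows "A (\<Sum>j\<in>S. f j) = (\<Sum>j\<in>S. A (f j))"
proof -
  have A0: "A 0 = 0" using assms by (metis add_cancel_right_right add_0)
  show ?thesis
  proof (induction S rule: infinite_finite_induct)
    case (infinite S) then show ?case using A0 by simp
  next
    case empty then show ?case using A0 by simp
  next
    case (insert x F) then show ?case using assms by simp
  qed
qed

theorem proposition3:
  fixes scaleX :: "'f::field \<Rightarrow> 'x::ab_group_add \<Rightarrow> 'x"
    and scaleU :: "'f \<Rightarrow> 'u::ab_group_add \<Rightarrow> 'u"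
    and A :: "'x \<Rightarrow> 'x" and B :: "'u \<Rightarrow> 'x" and g :: "'x \<Rightarrow> real"
    and r :: nat and Xs :: "nat \<Rightarrow> 'x set" and T :: nat
  assumes vsX: "vector_space scaleX"
    and vsU: "vector_space scaleU"
    and fdX: "\<exists>S. finite S \<and> module.span scaleX S = UNIV"
    and fdU: "\<exists>S. finite S \<and> module.span scaleU S = UNIV"
    and linA: "Vector_Spaces.linear scaleX scaleX A"
    and linB: "Vector_Spaces.linear scaleU scaleX B"
    and injB: "inj B"
    and g_nonneg: "\<forall>x. g x \<ge> 0"
    and g_zero: "\<forall>x. g x = 0 \<longleftrightarrow> x = 0"
    and dec: "is_decomposition scaleX A r Xs"
    and gGs: "g \<in> G_s r Xs"
    and Tpos: "T > 0"
    and attJ: "\<forall>t<T. \<forall>x. \<exists>u. \<forall>v. Jstar A B g T (Suc t) (A x + B u) \<le> Jstar A B g T (Suc t) (A x + B v)"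
    and attJbar: "\<forall>i\<in>idx r. \<forall>t<T. \<forall>z\<in>Xs i. \<exists>u\<in>Eset B (Xs i). \<forall>v\<in>Eset B (Xs i).
                    Jbar A B g (Xs i) T (Suc t) (A z + B u) \<le> Jbar A B g (Xs i) T (Suc t) (A z + B v)"
    and hyp: "\<forall>x. \<forall>t<T. {u. \<forall>v. Jstar A B g T (Suc t) (A x + B u) \<le> Jstar A B g T (Suc t) (A x + B v)}
                 \<inter> {\<Sum>i\<in>idx r. f i | f. \<forall>i\<in>idx r. f i \<in> Eset B (Xs i)} \<noteq> {}"
  shows "\<forall>t\<le>T. \<forall>i\<in>idx r. \<forall>z\<in>Xs i. Jstar A B g T t z = Jbar A B g (Xs i) T t z"
proof -
  define I where "I = idx r"
  define V where "V = ctg A B g UNIV"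
  define W where "W = (\<lambda>j. ctg A B g (Eset B (Xs j)))"
  define \<rho> where "\<rho> = proj r Xs"
  have finI: "finite I" unfolding I_def by simp
  have addA: "\<forall>x y. A (x + y) = A x + A y"
    using module_hom.add[OF linA[unfolded linear_iff_module_hom]] by blast
  have addB: "\<forall>x y. B (x + y) = B x + B y"
    using module_hom.add[OF linB[unfolded linear_iff_module_hom]] by blast
  have A0: "A 0 = 0" using module_hom.zero[OF linA[unfolded linear_iff_module_hom]] .
  have B0: "B 0 = 0" using module_hom.zero[OF linB[unfolded linear_iff_module_hom]] .
  have sub: "\<And>j. j \<in> I \<Longrightarrow> module.subspace scaleX (Xs j) \<and> A ` Xs j \<subseteq> Xs j"
    using dec unfolding is_decomposition_def I_def by blast
  have modX: "module scaleX" using vsX by (simp add: module_iff_vector_space)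
  have X0: "\<And>j. j \<in> I \<Longrightarrow> 0 \<in> Xs j"
    using sub module.subspace_0[OF modX] by blast
  have Xadd: "\<And>j x y. j \<in> I \<Longrightarrow> x \<in> Xs j \<Longrightarrow> y \<in> Xs j \<Longrightarrow> x + y \<in> Xs j"
    using sub module.subspace_add[OF modX] by blast
  have XA: "\<And>j x. j \<in> I \<Longrightarrow> x \<in> Xs j \<Longrightarrow> A x \<in> Xs j" using sub by blast
  define P where "P = (\<lambda>x f. (\<forall>j\<in>I. f j \<in> Xs j) \<and> (\<forall>j. j \<notin> I \<longrightarrow> f j = (0::'x)) \<and>
              x = (\<Sum>j\<in>I. f j))"
  have ex1: "\<And>x. \<exists>!f. P x f" using dec unfolding is_decomposition_def P_def I_def by (elim conjE) (rule spec)
  have rho_eq: "\<And>x j. \<rho> j x = (THE f. P x f) j" unfolding \<rho>_def proj_def P_def I_def by simp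
  have D1: "\<And>x. (\<forall>j\<in>I. \<rho> j x \<in> Xs j) \<and> x = (\<Sum>j\<in>I. \<rho> j x)"
  proof -
    fix x
    have "P x (THE f. P x f)" using theI'[OF ex1] .
    then show "(\<forall>j\<in>I. \<rho> j x \<in> Xs j) \<and> x = (\<Sum>j\<in>I. \<rho> j x)"
      unfolding P_def rho_eq by simp
  qed
  have D2: "\<And>x f j. (\<forall>j\<in>I. f j \<in> Xs j) \<Longrightarrow> x = (\<Sum>j\<in>I. f j) \<Longrightarrow> j \<in> I \<Longrightarrow> \<rho> j x = f j"
  proof -
    fix x f j
    assume h: "\<forall>j\<in>I. f j \<in> Xs j" "x = (\<Sum>j\<in>I. f j)" "j \<in> I"
    define f' where "f' = (\<lambda>j. if j \<in> I then f j else 0)"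
    have s: "(\<Sum>j\<in>I. f' j) = (\<Sum>j\<in>I. f j)" unfolding f'_def by simp
    have "P x f'" unfolding P_def using h s unfolding f'_def by simp
    then have "(THE f. P x f) = f'" by (rule the1_equality[OF ex1])
    then have "(THE f. P x f) j = f j" using h(3) unfolding f'_def by simp
    then show "\<rho> j x = f j" by (simp only: rho_eq)
  qed
  have D3: "\<And>i j z. i \<in> I \<Longrightarrow> j \<in> I \<Longrightarrow> z \<in> Xs i \<Longrightarrow> \<rho> j z = (if j = i then z else 0)"
  proof -
    fix i j z assume h: "i \<in> I" "j \<in> I" "z \<in> Xs i"
    have a: "\<forall>j\<in>I. (if j = i then z else 0) \<in> Xs j" using h X0 by simp
    have b: "z = (\<Sum>j\<in>I. (if j = i then z else 0))" using h finI by (simp add: sum.delta)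
    show "\<rho> j z = (if j = i then z else 0)" using D2[OF a b h(2)] .
  qed
  have gsep0: "\<forall>x. g x = (\<Sum>i\<in>idx r. g (proj r Xs i x))"
    using gGs unfolding G_s_def mem_Collect_eq by (rule conjunct2)
  have gsep: "g x = (\<Sum>j\<in>I. g (\<rho> j x))" for x
    using gsep0 unfolding I_def \<rho>_def by (rule spec)
  have Ene: "\<And>j. j \<in> I \<Longrightarrow> Eset B (Xs j) \<noteq> {}"
    using X0 B0 unfolding Eset_def by (auto intro!: exI[of _ 0])
  have Wnn: "\<And>j k x. j \<in> I \<Longrightarrow> W j k x \<ge> 0"
    unfolding W_def using ctg_nonneg[OF g_nonneg Ene] by blast
  have W0: "\<And>j k. j \<in> I \<Longrightarrow> W j k 0 = 0"
  proof -
    fix j k assume j: "j \<in> I"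
    show "W j k 0 = 0"
    proof (induction k)
      case 0 then show ?case using g_zero unfolding W_def by simp
    next
      case (Suc k)
      have e0: "0 \<in> Eset B (Xs j)" using X0 j B0 unfolding Eset_def by simp
      have "(INF u\<in>Eset B (Xs j). W j k (A 0 + B u)) = W j k (A 0 + B 0)"
        using e0 Wnn[OF j] Suc by (intro INF_at_min) (auto simp: A0 B0)
      then show ?case using Suc g_zero A0 B0 unfolding W_def by simp
    qed
  qed
  have main: "\<And>k. k \<le> T \<Longrightarrow> \<forall>y. V k y = (\<Sum>j\<in>I. W j k (\<rho> j y))"
  proof -
    fix k assume "k \<le> T"
    then show "\<forall>y. V k y = (\<Sum>j\<in>I. W j k (\<rho> j y))"
    proof (induction k)
      case 0 show ?case unfolding V_def W_def ctg.simps by (intro allI gsep)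
    next
      case (Suc k)
      then have kT: "k < T" by simp
      have IH: "\<And>y. V k y = (\<Sum>j\<in>I. W j k (\<rho> j y))" using Suc by simp
      define t where "t = T - Suc k"
      have tT: "t < T" and Tt: "T - Suc t = k" using kT unfolding t_def by auto
      show ?case
      proof
        fix x
        have "\<forall>j\<in>I. \<exists>u\<in>Eset B (Xs j). \<forall>v\<in>Eset B (Xs j). W j k (A (\<rho> j x) + B u) \<le> W j k (A (\<rho> j x) + B v)"
        proof
          fix j assume j: "j \<in> I"
          then have j': "j \<in> idx r" unfolding I_def .
          have "\<rho> j x \<in> Xs j" using D1 j by blast
          from attJbar[rule_format, OF j' tT this]
          show "\<exists>u\<in>Eset B (Xs j). \<forall>v\<in>Eset B (Xs j). W j k (A (\<rho> j x) + B u) \<le> W j k (A (\<rho> j x) + B v)"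
            unfolding Jbar_def Tt W_def .
        qed
        then obtain vv where vv: "\<And>j. j \<in> I \<Longrightarrow> vv j \<in> Eset B (Xs j) \<and>
             (\<forall>v\<in>Eset B (Xs j). W j k (A (\<rho> j x) + B (vv j)) \<le> W j k (A (\<rho> j x) + B v))"
          by metis
        have Wsuc: "\<And>j. j \<in> I \<Longrightarrow> W j (Suc k) (\<rho> j x) = g (\<rho> j x) + W j k (A (\<rho> j x) + B (vv j))"
        proof -
          fix j assume j: "j \<in> I"
          have "(INF u\<in>Eset B (Xs j). W j k (A (\<rho> j x) + B u)) = W j k (A (\<rho> j x) + B (vv j))"
            using vv[OF j] by (intro INF_at_min) auto
          then show "W j (Suc k) (\<rho> j x) = g (\<rho> j x) + W j k (A (\<rho> j x) + B (vv j))"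
            unfolding W_def by simp
        qed
        from hyp[rule_format, OF tT, of x] obtain u f where uf: "\<forall>v. V k (A x + B u) \<le> V k (A x + B v)"
          "u = (\<Sum>i\<in>I. f i)" "\<forall>i\<in>I. f i \<in> Eset B (Xs i)"
          unfolding Jstar_def Tt V_def I_def by auto
        have Vsuc: "V (Suc k) x = g x + V k (A x + B u)"
        proof -
          have "(INF v\<in>UNIV. V k (A x + B v)) = V k (A x + B u)"
            using uf(1) by (intro INF_at_min) auto
          then show ?thesis unfolding V_def by simp
        qed
        have Ax: "A x = (\<Sum>j\<in>I. A (\<rho> j x))"
          using D1[of x] additive_sum[OF addA] by metis
        have decomp: "\<And>w. (\<forall>j\<in>I. w j \<in> Eset B (Xs j)) \<Longrightarrow>
            V k (A x + B (\<Sum>j\<in>I. w j)) = (\<Sum>j\<in>I. W j k (A (\<rho> j x) + B (w j)))"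
        proof -
          fix w assume w: "\<forall>j\<in>I. w j \<in> Eset B (Xs j)"
          have eq: "A x + B (\<Sum>j\<in>I. w j) = (\<Sum>j\<in>I. A (\<rho> j x) + B (w j))"
            using Ax additive_sum[OF addB] by (simp add: sum.distrib)
          have mem: "\<forall>j\<in>I. A (\<rho> j x) + B (w j) \<in> Xs j"
            using w D1 XA Xadd unfolding Eset_def by blast
          have "\<And>j. j \<in> I \<Longrightarrow> \<rho> j (A x + B (\<Sum>j\<in>I. w j)) = A (\<rho> j x) + B (w j)"
            using D2[OF mem eq] by blast
          then show "V k (A x + B (\<Sum>j\<in>I. w j)) = (\<Sum>j\<in>I. W j k (A (\<rho> j x) + B (w j)))"
            using IH by simp
        qed
        have lo: "V k (A x + B u) \<ge> (\<Sum>j\<in>I. W j k (A (\<rho> j x) + B (vv j)))"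
        proof -
          have "V k (A x + B u) = (\<Sum>j\<in>I. W j k (A (\<rho> j x) + B (f j)))"
            using decomp uf by simp
          also have "\<dots> \<ge> (\<Sum>j\<in>I. W j k (A (\<rho> j x) + B (vv j)))"
            using vv uf(3) by (intro sum_mono) blast
          finally show ?thesis .
        qed
        have hi: "V k (A x + B u) \<le> (\<Sum>j\<in>I. W j k (A (\<rho> j x) + B (vv j)))"
          using uf(1) decomp[of vv] vv by (metis)
        have "V (Suc k) x = (\<Sum>j\<in>I. g (\<rho> j x)) + (\<Sum>j\<in>I. W j k (A (\<rho> j x) + B (vv j)))"
          using Vsuc lo hi gsep[of x] by simp
        also have "\<dots> = (\<Sum>j\<in>I. W j (Suc k) (\<rho> j x))"
          using Wsuc by (simp add: sum.distrib)
        finally show "V (Suc k) x = (\<Sum>j\<in>I. W j (Suc k) (\<rho> j x))" .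
      qed
    qed
  qed
  show ?thesis
  proof (intro allI impI ballI)
    fix t i z assume t: "t \<le> T" and i: "i \<in> idx r" and z: "z \<in> Xs i"
    have iI: "i \<in> I" using i I_def by simp
    have "V (T - t) z = (\<Sum>j\<in>I. W j (T - t) (\<rho> j z))" using main[of "T - t"] by simp
    also have "\<dots> = (\<Sum>j\<in>I. if j = i then W i (T - t) z else 0)"
      using D3[OF iI _ z] W0 by (intro sum.cong) auto
    also have "\<dots> = W i (T - t) z" using iI finI by simp
    finally show "Jstar A B g T t z = Jbar A B g (Xs i) T t z"
      unfolding Jstar_def Jbar_def V_def W_def by simp
  qed
qed

end
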